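(* If $w\in\Sigma^*$ is square-free, then every scattered factor $u$ of $w$ with $|E(w,u)|\ge2$ satisfies $|C(w,u)|>1$.
   Context: A word $w$ is square-free if it has no factor of the form $yy$ with $y$ a nonempty word. An embedding of $u$ in $w$ is a map $e:\{1,\dots,|u|\}\to\{1,\dots,|w|\}$ with $e(1)<\dots<e(|u|)$ and $u[i]=w[e(i)]$; $E(w,u)$ is the set of embeddings of $u$ in $w$. The shuffle $\mathrm{Sh}(u,v)$ is the set of words of length $|u|+|v|$ admitting an embedding of $u$ and one of $v$ with disjoint images covering all positions, and $C(w,u)=\{v\in\Sigma^{|w|-|u|}: w\in\mathrm{Sh}(u,v)\}$. *)

theory Defs
  imports Main
begin

(* Words are lists over an alphabet type 'a; positions are 0-based.
   An embedding of u in w is represented as the list [e(1),...,e(|u|)] of positions. *)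

definition square_free :: "'a list \<Rightarrow> bool" where
  "square_free w \<longleftrightarrow> \<not> (\<exists>x y z. y \<noteq> [] \<and> w = x @ y @ y @ z)"

definition is_embedding :: "'a list \<Rightarrow> 'a list \<Rightarrow> nat list \<Rightarrow> bool" where
  "is_embedding w u e \<longleftrightarrow> length e = length u \<and> sorted_wrt (<) e
     \<and> (\<forall>i < length u. e ! i < length w \<and> u ! i = w ! (e ! i))"

definition Emb :: "'a list \<Rightarrow> 'a list \<Rightarrow> nat list set" where
  "Emb w u = {e. is_embedding w u e}"

definition scattered_factor :: "'a list \<Rightarrow> 'a list \<Rightarrow> bool" where
  "scattered_factor u w \<longleftrightarrow> Emb w u \<noteq> {}"

definition in_shuffle :: "'a list \<Rightarrow> 'a list \<Rightarrow> 'a list \<Rightarrow> bool" where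
  "in_shuffle w u v \<longleftrightarrow> length w = length u + length v \<and>
     (\<exists>e f. is_embedding w u e \<and> is_embedding w v f \<and> set e \<inter> set f = {}
            \<and> set e \<union> set f = {0..<length w})"

definition Compl :: "'a list \<Rightarrow> 'a list \<Rightarrow> 'a list set" where
  "Compl w u = {v. length v = length w - length u \<and> in_shuffle w u v}"

end

theory Submission
  imports Defs
begin

definition compw :: "'a list \<Rightarrow> nat set \<Rightarrow> 'a list" where
  "compw w S = map (nth w) (filter (\<lambda>j. j \<notin> S) [0..<length w])"

lemma emb_set: "is_embedding w u e \<Longrightarrow> set e \<subseteq> {0..<length w}"
  unfolding is_embedding_def by (auto simp: in_set_conv_nth)

lemma sw_distinct: "sorted_wrt (<) (xs::nat list) \<Longrightarrow> distinct xs"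
  by (induction xs) auto

lemma emb_distinct: "is_embedding w u e \<Longrightarrow> distinct e"
  unfolding is_embedding_def by (simp add: sw_distinct)

lemma compw_in:
  assumes "is_embedding w u e"
  shows "compw w (set e) \<in> Compl w u"
proof -
  define c where "c = filter (\<lambda>j. j \<notin> set e) [0..<length w]"
  have sub: "set e \<subseteq> {0..<length w}" using emb_set[OF assms] .
  have de: "distinct e" using emb_distinct[OF assms] .
  have le: "length e = length u" using assms unfolding is_embedding_def by simp
  have setc: "set c = {0..<length w} - set e" unfolding c_def by auto
  have dc: "distinct c" unfolding c_def by simp
  have "length c = card ({0..<length w} - set e)"
    using distinct_card[OF dc] setc by simp
  also have "\<dots> = length w - length e"
    using card_Diff_subset[OF _ sub] distinct_card[OF de] by simp
  finally have lc: "length c = length w - length u" using le by simp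
  have lu: "length u \<le> length w"
    using card_mono[OF _ sub] distinct_card[OF de] le by simp
  have ec: "is_embedding w (compw w (set e)) c"
    unfolding is_embedding_def compw_def c_def[symmetric]
  proof (intro conjI allI impI)
    show "sorted_wrt (<) c" unfolding c_def by (rule sorted_wrt_filter) simp
  next
    fix i assume "i < length (map ((!) w) c)"
    then have "c ! i \<in> set c" by simp
    then show "c ! i < length w" using setc by auto
  qed (auto)
  have lv: "length (compw w (set e)) = length w - length u"
    using lc by (simp add: compw_def c_def[symmetric])
  have "in_shuffle w u (compw w (set e))"
    unfolding in_shuffle_def
  proof (intro conjI exI)
    show "length w = length u + length (compw w (set e))" using lv lu by simp
    show "is_embedding w u e" by (rule assms)
    show "is_embedding w (compw w (set e)) c" by (rule ec)
    show "set e \<inter> set c = {}" using setc by blast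
    show "set e \<union> set c = {0..<length w}" using setc sub by blast
  qed
  then show ?thesis unfolding Compl_def using lv by blast
qed

lemma Compl_finite: "finite (Compl w u)"
proof -
  have "Compl w u \<subseteq> {xs. set xs \<subseteq> set w \<and> length xs = length w - length u}"
  proof
    fix v assume "v \<in> Compl w u"
    then have l: "length v = length w - length u" and sh: "in_shuffle w u v"
      unfolding Compl_def by simp_all
    from sh obtain f where f: "is_embedding w v f"
      unfolding in_shuffle_def by blast
    have "set v \<subseteq> set w"
    proof
      fix x assume "x \<in> set v"
      then obtain k where "k < length v" "x = v ! k" by (auto simp: in_set_conv_nth)
      moreover have "length f = length v" "\<forall>i < length v. f ! i < length w \<and> v ! i = w ! (f ! i)"
        using f unfolding is_embedding_def by simp_all
      ultimately show "x \<in> set w" by auto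
    qed
    then show "v \<in> {xs. set xs \<subseteq> set w \<and> length xs = length w - length u}" using l by simp
  qed
  moreover have "finite {xs. set xs \<subseteq> set w \<and> length xs = length w - length u}"
    by (rule finite_lists_length_eq) simp
  ultimately show ?thesis by (rule finite_subset)
qed

lemma key:
  assumes sf: "square_free w"
    and e: "is_embedding w u e" and f: "is_embedding w u f"
    and i: "i < length u" and eq: "\<forall>j<i. e ! j = f ! j" and lt: "e ! i < f ! i"
  shows "\<exists>v1 v2. v1 \<in> Compl w u \<and> v2 \<in> Compl w u \<and> v1 \<noteq> v2"
proof -
  define a where "a = e ! i"
  define b where "b = f ! i"
  define g where "g = f[i := a]"
  have lf: "length f = length u" and le: "length e = length u"
    using e f unfolding is_embedding_def by auto
  have sfs: "sorted_wrt (<) f" and ses: "sorted_wrt (<) e"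
    using e f unfolding is_embedding_def by auto
  have ab: "a < b" using lt a_def b_def by simp
  have bw: "b < length w" using f i unfolding is_embedding_def b_def by auto
  have before: "f ! k < a" if "k < i" for k
  proof -
    have "e ! k < e ! i" using sorted_wrt_nth_less[OF ses that] i le by simp
    then show ?thesis using eq that a_def by simp
  qed
  have after: "b < f ! k" if "i < k" "k < length u" for k
    using sorted_wrt_nth_less[OF sfs that(1)] that lf b_def by simp
  have g: "is_embedding w u g"
    unfolding is_embedding_def
  proof (intro conjI allI impI)
    show "length g = length u" using g_def lf by simp
    show "sorted_wrt (<) g" unfolding sorted_wrt_iff_nth_less
    proof (intro allI impI)
      fix p q assume pq: "p < q" "q < length g"
      then have q: "q < length u" using g_def lf by simp
      show "g ! p < g ! q"
      proof (cases "q = i")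
        case True then show ?thesis using pq q before lf by (simp add: g_def)
      next
        case qi: False
        show ?thesis
        proof (cases "p = i")
          case True
        have "b < f ! q" using after pq q True by simp
        then show ?thesis using pq q ab lf qi True by (simp add: g_def)
        next
          case False then show ?thesis using pq q qi sorted_wrt_nth_less[OF sfs pq(1)] lf
            by (simp add: g_def)
        qed
      qed
    qed
    fix k assume k: "k < length u"
    show "g ! k < length w" using k e f lf unfolding is_embedding_def g_def a_def
      by (cases "k = i") auto
    show "u ! k = w ! (g ! k)" using k e f lf unfolding is_embedding_def g_def a_def
      by (cases "k = i") auto
  qed
  have df: "distinct f" using emb_distinct[OF f] .
  have setg: "set g = insert a (set f - {b})"
    unfolding g_def b_def using set_update_distinct[OF df] i lf by simp
  have fab: "j \<in> set f \<longleftrightarrow> j = b" if "a \<le> j" "j \<le> b" for j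
  proof
    assume "j \<in> set f"
    then obtain k where k: "k < length u" "j = f ! k" using lf by (auto simp: in_set_conv_nth)
    have "k = i"
    proof (rule ccontr)
      assume "k \<noteq> i"
      then have "k < i \<or> i < k" by auto
      then show False
      proof
        assume "k < i" then have "f ! k < a" by (rule before)
        then show False using k that by simp
      next
        assume "i < k" then have "b < f ! k" using k by (intro after)
        then show False using k that by simp
      qed
    qed
    then show "j = b" using k b_def by simp
  next
    assume "j = b" then show "j \<in> set f" using b_def i lf by simp
  qed
  have out: "(j \<in> set g) = (j \<in> set f)" if "j < a \<or> b < j" for j
  proof -
    have "j \<noteq> a" "j \<noteq> b" using that ab by auto
    then show ?thesis unfolding setg by simp
  qed
  define P where "P = filter (\<lambda>j. j \<notin> set f) [0..<a]"
  define Q where "Q = filter (\<lambda>j. j \<notin> set f) [Suc b..<length w]"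
  have split: "[0..<length w] = [0..<a] @ [a..<b] @ [b] @ [Suc b..<length w]"
  proof -
    have 1: "[0..<length w] = [0..<a] @ [a..<length w]"
      using upt_add_eq_append[of 0 a "length w - a"] ab bw by simp
    have 2: "[a..<length w] = [a..<b] @ [b..<length w]"
      using upt_add_eq_append[of a b "length w - b"] ab bw by simp
    have 3: "[b..<length w] = [b] @ [Suc b..<length w]"
      using bw by (simp add: upt_conv_Cons)
    show ?thesis using 1 2 3 by simp
  qed
  have ff: "filter (\<lambda>j. j \<notin> set f) [0..<length w] = P @ [a..<b] @ Q"
  proof -
    have "filter (\<lambda>j. j \<notin> set f) [a..<b] = [a..<b]"
      using fab by (auto intro!: filter_True)
    then show ?thesis unfolding split P_def Q_def using b_def i lf by simp
  qed
  have fg: "filter (\<lambda>j. j \<notin> set g) [0..<length w] = P @ [Suc a..<b] @ [b] @ Q"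
  proof -
    have "filter (\<lambda>j. j \<notin> set g) [0..<a] = P" unfolding P_def
      using out by (auto intro!: filter_cong)
    moreover have "filter (\<lambda>j. j \<notin> set g) [Suc b..<length w] = Q" unfolding Q_def
      using out by (auto intro!: filter_cong)
    moreover have "filter (\<lambda>j. j \<notin> set g) [a..<b] = [Suc a..<b]"
    proof -
      have "[a..<b] = a # [Suc a..<b]" using ab by (simp add: upt_conv_Cons)
      moreover have "filter (\<lambda>j. j \<notin> set g) [Suc a..<b] = [Suc a..<b]"
        using setg fab by (auto intro!: filter_True)
      ultimately show ?thesis using setg by simp
    qed
    moreover have "b \<notin> set g" using setg ab by simp
    ultimately show ?thesis unfolding split by simp
  qed
  have "compw w (set g) \<noteq> compw w (set f)"
  proof
    assume "compw w (set g) = compw w (set f)"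
    then have "map ((!) w) ([Suc a..<b] @ [b]) = map ((!) w) [a..<b]"
      unfolding compw_def fg ff by simp
    moreover have "[a..<b] = a # [Suc a..<b]" using ab by (simp add: upt_conv_Cons)
    moreover have "[Suc a..<b] @ [b] = Suc a # [Suc (Suc a)..<Suc b]"
    proof -
      have "[Suc a..<b] @ [b] = [Suc a..<Suc b]" using ab by simp
      also have "\<dots> = Suc a # [Suc (Suc a)..<Suc b]" using ab by (simp add: upt_conv_Cons)
      finally show ?thesis .
    qed
    ultimately have "w ! Suc a = w ! a" by simp
    moreover have "Suc a < length w" using ab bw by simp
    moreover have "drop a w = w ! a # w ! Suc a # drop (Suc (Suc a)) w"
      using \<open>Suc a < length w\<close> by (simp add: Cons_nth_drop_Suc)
    moreover have "w = take a w @ drop a w" by simp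
    ultimately have "w = take a w @ [w ! a] @ [w ! a] @ drop (Suc (Suc a)) w"
      by simp
    then show False using sf unfolding square_free_def by blast
  qed
  then show ?thesis using compw_in[OF g] compw_in[OF f] by blast
qed

theorem lemma29:
  fixes w u :: "'a list"
  assumes "square_free w"
    and "scattered_factor u w"
    and "card (Emb w u) \<ge> 2"
  shows "card (Compl w u) > 1"
proof -
  have fin: "finite (Emb w u)" using assms(3) by (metis card.infinite not_numeral_le_zero)
  have "Emb w u \<noteq> {}" using assms(3) by (cases "Emb w u = {}") auto
  then obtain e where e: "e \<in> Emb w u" by blast
  have "card (Emb w u - {e}) \<ge> 1" using assms(3) e fin by (simp add: card_Diff_singleton)
  then have "Emb w u - {e} \<noteq> {}" by (metis card.empty not_one_le_zero)
  then obtain f where f: "f \<in> Emb w u" "f \<noteq> e" by blast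
  have ee: "is_embedding w u e" and fe: "is_embedding w u f" using e f Emb_def by auto
  have lens: "length e = length u" "length f = length u"
    using ee fe unfolding is_embedding_def by auto
  have "\<exists>i. i < length u \<and> e ! i \<noteq> f ! i"
  proof (rule ccontr)
    assume "\<not> (\<exists>i. i < length u \<and> e ! i \<noteq> f ! i)"
    then have "e = f" using lens by (intro nth_equalityI) auto
    then show False using f(2) by simp
  qed
  then obtain i where i: "i < length u" "e ! i \<noteq> f ! i"
    and m: "\<forall>j<i. \<not> (j < length u \<and> e ! j \<noteq> f ! j)"
    using exists_least_iff[of "\<lambda>i. i < length u \<and> e ! i \<noteq> f ! i"] by blast
  have eq: "\<forall>j<i. e ! j = f ! j" using m i by auto
  have "\<exists>v1 v2. v1 \<in> Compl w u \<and> v2 \<in> Compl w u \<and> v1 \<noteq> v2"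
  proof (cases "e ! i < f ! i")
    case True then show ?thesis using key[OF assms(1) ee fe i(1) eq] by blast
  next
    case False
    then have "f ! i < e ! i" using i by simp
    moreover have "\<forall>j<i. f ! j = e ! j" using eq by simp
    ultimately show ?thesis using key[OF assms(1) fe ee i(1)] by blast
  qed
  then obtain v1 v2 where "v1 \<in> Compl w u" "v2 \<in> Compl w u" "v1 \<noteq> v2" by blast
  then have "card {v1, v2} \<le> card (Compl w u)" using Compl_finite by (intro card_mono) auto
  then show ?thesis using \<open>v1 \<noteq> v2\<close> by simp
qed

end
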